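(* Let $\mathcal{J}$ be an adapted almost tangent structure on $T^{*}M$, $\rho$ a $\mathcal{J}$-regular vector field, $\mathcal{N}$ an arbitrary nonlinear connection with projectors $h,v$, and $\nabla$ the dynamical covariant derivative with respect to $\rho$ and $\mathcal{N}$. The following conditions are equivalent: (i) $\nabla\mathcal{J}=0$; (ii) $\mathcal{L}_\rho\mathcal{J}+h-v=0$; (iii) $\mathcal{N}_{ij}=\frac12\Big(t_{ik}\frac{\partial\chi_j}{\partial p_k}-t_{kj}\frac{\partial\xi^k}{\partial x^i}-\rho(t_{ij})\Big)$.
   Context: $M$ is a smooth $n$-manifold, $T^*M$ its cotangent bundle with local coordinates $(x^i,p_i)$; summation over repeated indices. $VT^*M$ is the vertical distribution spanned by $\frac{\partial}{\partial p_i}$. A nonlinear connection $\mathcal{N}$ is a distribution $HT^*M$ supplementary to $VT^*M$; locally it has adapted basis $\frac{\delta}{\delta x^i}=\frac{\partial}{\partial x^i}+\mathcal{N}_{ij}\frac{\partial}{\partial p_j}$ with dual forms $dx^i$, $\delta p_i=dp_i-\mathcal{N}_{ij}dx^j$; its projectors are $h=\frac{\delta}{\delta x^i}\otimes dx^i$, $v=\frac{\partial}{\partial p_i}\otimes\delta p_i$. An adapted almost tangent structure is a $(1,1)$-tensor field $\mathcal{J}$ of rank $n$ with $\mathcal{J}^2=0$ and $\operatorname{Im}\mathcal{J}=\operatorname{Ker}\mathcal{J}=VT^*M$; locally $\mathcal{J}=t_{ij}dx^i\otimes\frac{\partial}{\partial p_j}$. A vector field $\rho=\xi^i(x,p)\frac{\partial}{\partial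 x^i}+\chi_i(x,p)\frac{\partial}{\partial p_i}$ is $\mathcal{J}$-regular if $\mathcal{J}[\rho,\mathcal{J}X]=-\mathcal{J}X$ for all vector fields $X$. $\mathcal{L}_\rho\mathcal{J}$ is the $(1,1)$-tensor $X\mapsto[\rho,\mathcal{J}X]-\mathcal{J}[\rho,X]$. The dynamical covariant derivative with respect to $\rho$ and $\mathcal{N}$ is the tensor derivation $\nabla$ on $T^*M\setminus\{0\}$ ($\mathbb{R}$-linear, type preserving, Leibniz rule, commuting with contractions) determined by $\nabla f=\rho(f)$ on functions and $\nabla X=h[\rho,hX]+v[\rho,vX]$ on vector fields; on a $(1,1)$-tensor $T$, $\nabla T=\nabla\circ T-T\circ\nabla$. *)

theory Defs
  imports "HOL-Analysis.Analysis"
begin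

text \<open>Local-coordinate model of the cotangent bundle over a chart:
  points (x,p) of T*M are pairs of vectors in R^n, index type 'n.
  Vector fields are maps 'n cot => 'n cot (components in the coordinate
  frame d/dx^i, d/dp_i); (1,1)-tensor fields are fields of linear maps.\<close>

type_synonym 'n cot = "(real^'n) \<times> (real^'n)"

fun Ck_on :: "nat \<Rightarrow> ('a::euclidean_space) set \<Rightarrow> ('a \<Rightarrow> 'b::real_normed_vector) \<Rightarrow> bool" where
  "Ck_on 0 W f = continuous_on W f"
| "Ck_on (Suc k) W f =
     ((\<forall>z\<in>W. f differentiable (at z)) \<and>
      (\<forall>b\<in>Basis. Ck_on k W (\<lambda>z. frechet_derivative f (at z) b)))"

definition smooth_on :: "('a::euclidean_space) set \<Rightarrow> ('a \<Rightarrow> 'b::real_normed_vector) \<Rightarrow> bool" where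
  "smooth_on W f \<longleftrightarrow> (\<forall>k. Ck_on k W f)"

definition vert :: "('n::finite) cot set" where
  "vert = {w. fst w = 0}"

definition lie :: "('n::finite cot \<Rightarrow> 'n cot) \<Rightarrow> ('n cot \<Rightarrow> 'n cot) \<Rightarrow> 'n cot \<Rightarrow> 'n cot" where
  "lie X Y z = frechet_derivative Y (at z) (X z) - frechet_derivative X (at z) (Y z)"

definition adapted_ats :: "('n::finite) cot set \<Rightarrow> ('n cot \<Rightarrow> 'n cot \<Rightarrow> 'n cot) \<Rightarrow> bool" where
  "adapted_ats W J \<longleftrightarrow>
     (\<forall>z\<in>W. linear (J z) \<and> J z \<circ> J z = (\<lambda>_. 0) \<and> range (J z) = vert \<and> {w. J z w = 0} = vert)
     \<and> (\<forall>w. smooth_on W (\<lambda>z. J z w))"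

text \<open>Components t_ij of J = t_ij dx^i (x) d/dp_j.\<close>
definition tcoef :: "('n::finite cot \<Rightarrow> 'n cot \<Rightarrow> 'n cot) \<Rightarrow> 'n cot \<Rightarrow> 'n \<Rightarrow> 'n \<Rightarrow> real" where
  "tcoef J z i j = snd (J z (axis i 1, 0)) $ j"

definition J_regular :: "('n::finite) cot set \<Rightarrow> ('n cot \<Rightarrow> 'n cot \<Rightarrow> 'n cot) \<Rightarrow> ('n cot \<Rightarrow> 'n cot) \<Rightarrow> bool" where
  "J_regular W J \<rho> \<longleftrightarrow> smooth_on W \<rho> \<and>
     (\<forall>X. smooth_on W X \<longrightarrow> (\<forall>z\<in>W. J z (lie \<rho> (\<lambda>y. J y (X y)) z) = - J z (X z)))"

text \<open>Nonlinear connection given by smooth coefficients N_ij: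
  delta/delta x^i = d/dx^i + N_ij d/dp_j.\<close>
definition nonlinear_connection :: "('n::finite) cot set \<Rightarrow> ('n cot \<Rightarrow> 'n \<Rightarrow> 'n \<Rightarrow> real) \<Rightarrow> bool" where
  "nonlinear_connection W N \<longleftrightarrow> (\<forall>i j. smooth_on W (\<lambda>z. N z i j))"

text \<open>Horizontal projector h = delta/delta x^i (x) dx^i and vertical projector v = id - h.\<close>
definition hproj :: "('n::finite cot \<Rightarrow> 'n \<Rightarrow> 'n \<Rightarrow> real) \<Rightarrow> 'n cot \<Rightarrow> 'n cot \<Rightarrow> 'n cot" where
  "hproj N z w = (fst w, \<chi> j. \<Sum>i\<in>UNIV. fst w $ i * N z i j)"

definition vproj :: "('n::finite cot \<Rightarrow> 'n \<Rightarrow> 'n \<Rightarrow> real) \<Rightarrow> 'n cot \<Rightarrow> 'n cot \<Rightarrow> 'n cot" where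
  "vproj N z w = w - hproj N z w"

definition dyn_nabla :: "('n::finite cot \<Rightarrow> 'n cot) \<Rightarrow> ('n cot \<Rightarrow> 'n \<Rightarrow> 'n \<Rightarrow> real) \<Rightarrow> ('n cot \<Rightarrow> 'n cot) \<Rightarrow> 'n cot \<Rightarrow> 'n cot" where
  "dyn_nabla \<rho> N X z =
     hproj N z (lie \<rho> (\<lambda>y. hproj N y (X y)) z) + vproj N z (lie \<rho> (\<lambda>y. vproj N y (X y)) z)"

definition dyn_nabla_T :: "('n::finite cot \<Rightarrow> 'n cot) \<Rightarrow> ('n cot \<Rightarrow> 'n \<Rightarrow> 'n \<Rightarrow> real) \<Rightarrow> ('n cot \<Rightarrow> 'n cot \<Rightarrow> 'n cot) \<Rightarrow> ('n cot \<Rightarrow> 'n cot) \<Rightarrow> 'n cot \<Rightarrow> 'n cot" where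
  "dyn_nabla_T \<rho> N T X z = dyn_nabla \<rho> N (\<lambda>y. T y (X y)) z - T z (dyn_nabla \<rho> N X z)"

definition lie_deriv_T :: "('n::finite cot \<Rightarrow> 'n cot) \<Rightarrow> ('n cot \<Rightarrow> 'n cot \<Rightarrow> 'n cot) \<Rightarrow> ('n cot \<Rightarrow> 'n cot) \<Rightarrow> 'n cot \<Rightarrow> 'n cot" where
  "lie_deriv_T \<rho> T X z = lie \<rho> (\<lambda>y. T y (X y)) z - T z (lie \<rho> X z)"

end

theory Submission
  imports Defs
begin

lemma Ck_const: "Ck_on k W (\<lambda>_. c)"
proof (induction k arbitrary: c)
  case 0 then show ?case by simp
next
  case (Suc k)
  have "(\<lambda>z. frechet_derivative (\<lambda>_. c) (at z) b) = (\<lambda>_. 0)" for b by (rule ext) simp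
  then show ?case using Suc by simp
qed

lemma smooth_const: "smooth_on W (\<lambda>_. c)"
  unfolding smooth_on_def using Ck_const by blast

lemma smooth_deriv:
  assumes "smooth_on W f" "z \<in> W"
  shows "(f has_derivative frechet_derivative f (at z)) (at z)"
proof -
  have "Ck_on (Suc 0) W f" using assms(1) unfolding smooth_on_def by blast
  then show ?thesis using assms(2) frechet_derivative_works by auto
qed

lemma fd_local:
  assumes "open W" "z \<in> W" "\<And>y. y \<in> W \<Longrightarrow> f y = g y"
  shows "frechet_derivative f (at z) = frechet_derivative g (at z)"
proof -
  have "(f has_derivative D) (at z) \<longleftrightarrow> (g has_derivative D) (at z)" for D
  proof
    assume "(f has_derivative D) (at z)"
    then show "(g has_derivative D) (at z)"
      by (rule has_derivative_transform_within_open[OF _ assms(1,2)]) (use assms(3) in auto)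
  next
    assume "(g has_derivative D) (at z)"
    then show "(f has_derivative D) (at z)"
      by (rule has_derivative_transform_within_open[OF _ assms(1,2)]) (use assms(3) in auto)
  qed
  then show ?thesis unfolding frechet_derivative_def by simp
qed

lemma fst_sum': "fst (sum f A) = sum (\<lambda>x. fst (f x)) A" by (rule fst_sum)
lemma "(x::real^'n) = (\<Sum>i\<in>UNIV. x$i *\<^sub>R axis i 1)"
  using basis_expansion[of x] by (simp add: scalar_mult_eq_scaleR)

definition Gfun :: "('n::finite cot \<Rightarrow> 'n cot \<Rightarrow> 'n cot) \<Rightarrow> 'n cot \<Rightarrow> 'n cot \<Rightarrow> 'n cot \<Rightarrow> 'n cot" where
  "Gfun J z v w = (\<Sum>b\<in>Basis. (w \<bullet> b) *\<^sub>R frechet_derivative (\<lambda>y. J y b) (at z) v)"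

lemma lin_expand:
  fixes L :: "'a::euclidean_space \<Rightarrow> 'b::real_vector"
  assumes "linear L" shows "L w = (\<Sum>b\<in>Basis. (w \<bullet> b) *\<^sub>R L b)"
proof -
  have "L w = L (\<Sum>b\<in>Basis. (w \<bullet> b) *\<^sub>R b)" by (simp add: euclidean_representation)
  also have "\<dots> = (\<Sum>b\<in>Basis. (w \<bullet> b) *\<^sub>R L b)"
    by (simp add: linear_sum[OF assms] linear_scale[OF assms])
  finally show ?thesis .
qed

lemma derivJX:
  assumes W: "open W" and J: "adapted_ats W J" and z: "z \<in> W"
    and X: "(X has_derivative B) (at z)"
  shows "((\<lambda>y. J y (X y)) has_derivative (\<lambda>v. J z (B v) + Gfun J z v (X z))) (at z)"
proof -
  have sm: "smooth_on W (\<lambda>y. J y b)" for b using J unfolding adapted_ats_def by blast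
  have dJ: "((\<lambda>y. J y b) has_derivative frechet_derivative (\<lambda>y. J y b) (at z)) (at z)" for b
    using smooth_deriv[OF sm z] .
  have "((\<lambda>y. \<Sum>b\<in>Basis. (X y \<bullet> b) *\<^sub>R J y b) has_derivative
     (\<lambda>h. \<Sum>b\<in>Basis. (X z \<bullet> b) *\<^sub>R frechet_derivative (\<lambda>y. J y b) (at z) h + (B h \<bullet> b) *\<^sub>R J z b)) (at z)"
    by (intro has_derivative_sum has_derivative_scaleR dJ has_derivative_inner_left X)
  then have "((\<lambda>y. J y (X y)) has_derivative
     (\<lambda>h. \<Sum>b\<in>Basis. (X z \<bullet> b) *\<^sub>R frechet_derivative (\<lambda>y. J y b) (at z) h + (B h \<bullet> b) *\<^sub>R J z b)) (at z)"
    by (rule has_derivative_transform_within_open[OF _ W z])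
       (use J in \<open>simp add: adapted_ats_def lin_expand[symmetric]\<close>)
  moreover have "(\<lambda>h. \<Sum>b\<in>Basis. (X z \<bullet> b) *\<^sub>R frechet_derivative (\<lambda>y. J y b) (at z) h + (B h \<bullet> b) *\<^sub>R J z b)
      = (\<lambda>v. J z (B v) + Gfun J z v (X z))"
  proof
    fix h
    have "linear (J z)" using J z unfolding adapted_ats_def by blast
    then show "(\<Sum>b\<in>Basis. (X z \<bullet> b) *\<^sub>R frechet_derivative (\<lambda>y. J y b) (at z) h + (B h \<bullet> b) *\<^sub>R J z b)
      = J z (B h) + Gfun J z h (X z)"
      by (simp add: sum.distrib Gfun_def lin_expand[of "J z" "B h"] add.commute)
  qed
  ultimately show ?thesis by simp
qed

lemma vec_expand: "(x::real^'n) = (\<Sum>i\<in>UNIV. x$i *\<^sub>R axis i 1)"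
  using basis_expansion[of x] by (simp add: scalar_mult_eq_scaleR)

lemma hproj_expand:
  "hproj N y w = (fst w, 0) + (\<Sum>j\<in>UNIV. (\<Sum>i\<in>UNIV. fst w $ i * N y i j) *\<^sub>R (0, axis j 1))"
proof -
  have "(\<Sum>j\<in>UNIV. (\<Sum>i\<in>UNIV. fst w $ i * N y i j) *\<^sub>R ((0::real^'a), axis j (1::real)))
     = (0, \<Sum>j\<in>UNIV. (\<Sum>i\<in>UNIV. fst w $ i * N y i j) *\<^sub>R axis j 1)"
    by (simp add: fst_sum snd_sum prod_eq_iff)
  also have "(\<Sum>j\<in>UNIV. (\<Sum>i\<in>UNIV. fst w $ i * N y i j) *\<^sub>R axis j 1) = (\<chi> j. \<Sum>i\<in>UNIV. fst w $ i * N y i j)"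
    by (subst (2) vec_expand) simp
  finally show ?thesis by (simp add: hproj_def)
qed

lemma derivH:
  assumes NC: "nonlinear_connection W N" and z: "z \<in> W"
    and X: "(X has_derivative B) (at z)"
  shows "\<exists>D. ((\<lambda>y. hproj N y (X y)) has_derivative D) (at z) \<and> (\<forall>v. fst (D v) = fst (B v))"
proof -
  have dN: "((\<lambda>y. N y i j) has_derivative frechet_derivative (\<lambda>y. N y i j) (at z)) (at z)" for i j
    using smooth_deriv[of W "\<lambda>y. N y i j" z] NC z unfolding nonlinear_connection_def by blast
  have dX: "((\<lambda>y. fst (X y) $ i) has_derivative (\<lambda>h. fst (B h) $ i)) (at z)" for i
    by (intro bounded_linear.has_derivative[OF bounded_linear_vec_nth] has_derivative_fst X)
  let ?D = "\<lambda>h. (fst (B h), 0) + (\<Sum>j\<in>UNIV. (\<Sum>i\<in>UNIV. fst (X z) $ i * frechet_derivative (\<lambda>y. N y i j) (at z) h + fst (B h) $ i * N z i j) *\<^sub>R ((0::real^'a), axis j (1::real)))"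
  have "((\<lambda>y. (fst (X y), 0) + (\<Sum>j\<in>UNIV. (\<Sum>i\<in>UNIV. fst (X y) $ i * N y i j) *\<^sub>R ((0::real^'a), axis j (1::real)))) has_derivative ?D) (at z)"
    by (intro has_derivative_add has_derivative_Pair has_derivative_fst X has_derivative_const
        has_derivative_sum has_derivative_scaleR_left has_derivative_mult dX dN)
  then have "((\<lambda>y. hproj N y (X y)) has_derivative ?D) (at z)"
    by (simp only: hproj_expand)
  moreover have "\<forall>v. fst (?D v) = fst (B v)" by (simp add: fst_sum)
  ultimately show ?thesis by blast
qed

lemma hproj_fst[simp]: "fst (hproj N z w) = fst w" by (simp add: hproj_def)
lemma hproj_cong: "fst w = fst w' \<Longrightarrow> hproj N z w = hproj N z w'" by (simp add: hproj_def)
lemma hproj_vert: "fst w = 0 \<Longrightarrow> hproj N z w = 0" by (simp add: hproj_def zero_prod_def vec_eq_iff)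
lemma vproj_fst[simp]: "fst (vproj N z w) = 0" by (simp add: vproj_def)
lemma vproj_vert: "fst w = 0 \<Longrightarrow> vproj N z w = w" by (simp add: vproj_def hproj_vert)
lemma linear_hproj: "linear (hproj N z)"
  by (rule linearI) (auto simp: hproj_def vec_eq_iff sum.distrib algebra_simps sum_distrib_left)
lemma linear_vproj: "linear (vproj N z)"
  unfolding vproj_def by (intro linear_compose_sub linear_ident linear_hproj)

definition Pfun :: "('n::finite cot \<Rightarrow> 'n cot \<Rightarrow> 'n cot) \<Rightarrow> ('n cot \<Rightarrow> 'n cot) \<Rightarrow> ('n cot \<Rightarrow> 'n \<Rightarrow> 'n \<Rightarrow> real) \<Rightarrow> 'n cot \<Rightarrow> 'n cot \<Rightarrow> 'n cot" where
  "Pfun J \<rho> N z w = Gfun J z (\<rho> z) w - frechet_derivative \<rho> (at z) (J z w)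
     + J z (frechet_derivative \<rho> (at z) w) + hproj N z w - vproj N z w"

context
  fixes W :: "('n::finite) cot set"
    and J :: "'n cot \<Rightarrow> 'n cot \<Rightarrow> 'n cot"
    and \<rho> :: "'n cot \<Rightarrow> 'n cot"
    and N :: "'n cot \<Rightarrow> 'n \<Rightarrow> 'n \<Rightarrow> real"
    and z :: "'n cot"
  assumes W: "open W"
    and J: "adapted_ats W J"
    and R: "J_regular W J \<rho>"
    and NC: "nonlinear_connection W N"
    and z: "z \<in> W"
begin

lemma linL: "linear (J y)" if "y \<in> W" using J that unfolding adapted_ats_def by blast
lemma fstL: "y \<in> W \<Longrightarrow> fst (J y x) = 0"
  using J unfolding adapted_ats_def vert_def by blast
lemma kerL: "y \<in> W \<Longrightarrow> J y x = 0 \<longleftrightarrow> fst x = 0"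
  using J unfolding adapted_ats_def vert_def by blast
lemma ranL: "fst q = 0 \<Longrightarrow> \<exists>u. q = J z u"
  using J z unfolding adapted_ats_def vert_def by blast
lemma L_cong: "fst q = fst q' \<Longrightarrow> J z q = J z q'"
proof -
  assume "fst q = fst q'"
  then have "J z (q - q') = 0" using kerL[OF z] by simp
  then show ?thesis using linear_diff[OF linL[OF z]] by simp
qed

lemma smooth_rho: "smooth_on W \<rho>" using R unfolding J_regular_def by blast
lemma dA: "(\<rho> has_derivative frechet_derivative \<rho> (at z)) (at z)"
  using smooth_deriv[OF smooth_rho z] .
lemma linA: "linear (frechet_derivative \<rho> (at z))"
  using dA has_derivative_linear by blast

lemma dJw: "((\<lambda>y. J y w) has_derivative (\<lambda>v. Gfun J z v w)) (at z)"
  using derivJX[OF W J z, of "\<lambda>_. w" "\<lambda>_. 0"] linear_0[OF linL[OF z]] by simp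

lemma fstG: "fst (Gfun J z v w) = 0"
proof -
  have "((\<lambda>y. fst (J y w)) has_derivative (\<lambda>v. fst (Gfun J z v w))) (at z)"
    by (intro has_derivative_fst dJw)
  then have "((\<lambda>y. 0) has_derivative (\<lambda>v. fst (Gfun J z v w))) (at z)"
    by (rule has_derivative_transform_within_open[OF _ W z]) (simp add: fstL)
  then show ?thesis using has_derivative_unique[OF _ has_derivative_const] by metis
qed

lemma Gvert: "fst w = 0 \<Longrightarrow> Gfun J z v w = 0"
proof -
  assume w: "fst w = 0"
  have "((\<lambda>y. 0) has_derivative (\<lambda>v. Gfun J z v w)) (at z)"
    by (rule has_derivative_transform_within_open[OF dJw W z]) (simp add: kerL w)
  then show ?thesis using has_derivative_unique[OF _ has_derivative_const] by metis
qed

lemma linG: "linear (Gfun J z v)"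
  by (rule linearI) (simp_all add: Gfun_def inner_add_left scaleR_add_left sum.distrib scaleR_sum_right)

lemma regular: "J z (frechet_derivative \<rho> (at z) (J z w)) = J z w"
proof -
  have "J z (lie \<rho> (\<lambda>y. J y w) z) = - J z w"
    using R smooth_const[of W w] z unfolding J_regular_def by blast
  moreover have "frechet_derivative (\<lambda>y. J y w) (at z) = (\<lambda>v. Gfun J z v w)"
    using frechet_derivative_at[OF dJw] by simp
  moreover have "J z (Gfun J z (\<rho> z) w) = 0" using kerL[OF z] fstG by simp
  ultimately show ?thesis
    by (simp add: lie_def linear_diff[OF linL[OF z]])
qed


lemma R1: "fst (frechet_derivative \<rho> (at z) (J z w)) = fst w"
proof -
  have "J z (frechet_derivative \<rho> (at z) (J z w) - w) = 0"
    using regular linear_diff[OF linL[OF z]] by simp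
  then show ?thesis using kerL[OF z] by simp
qed

lemma R2: "fst q = 0 \<Longrightarrow> J z (frechet_derivative \<rho> (at z) q) = q"
  using ranL regular by metis

lemma E2:
  assumes X: "smooth_on W X"
  shows "lie_deriv_T \<rho> J X z + hproj N z (X z) - vproj N z (X z) = Pfun J \<rho> N z (X z)"
proof -
  let ?B = "frechet_derivative X (at z)"
  have "frechet_derivative (\<lambda>y. J y (X y)) (at z) = (\<lambda>v. J z (?B v) + Gfun J z v (X z))"
    using frechet_derivative_at[OF derivJX[OF W J z smooth_deriv[OF X z]]] by simp
  then show ?thesis
    by (simp add: lie_deriv_T_def lie_def Pfun_def linear_diff[OF linL[OF z]] algebra_simps)
qed

lemma E1:
  assumes X: "smooth_on W X"
  shows "dyn_nabla_T \<rho> N J X z = Pfun J \<rho> N z (X z)"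
proof -
  let ?B = "frechet_derivative X (at z)"
  let ?A = "frechet_derivative \<rho> (at z)"
  let ?w = "X z"
  have dY: "frechet_derivative (\<lambda>y. J y (X y)) (at z) = (\<lambda>v. J z (?B v) + Gfun J z v (X z))"
    using frechet_derivative_at[OF derivJX[OF W J z smooth_deriv[OF X z]]] by simp
  have h1: "frechet_derivative (\<lambda>y. hproj N y (J y (X y))) (at z) = frechet_derivative (\<lambda>y. 0) (at z)"
    by (rule fd_local[OF W z]) (simp add: hproj_vert fstL)
  have v1: "frechet_derivative (\<lambda>y. vproj N y (J y (X y))) (at z) = frechet_derivative (\<lambda>y. J y (X y)) (at z)"
    by (rule fd_local[OF W z]) (simp add: vproj_vert fstL)
  have A0: "?A 0 = 0" using linear_0[OF linA] .
  have part1: "dyn_nabla \<rho> N (\<lambda>y. J y (X y)) z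
     = vproj N z (J z (?B (\<rho> z)) + Gfun J z (\<rho> z) ?w - ?A (J z ?w))"
    unfolding dyn_nabla_def lie_def h1 v1 dY
    by (simp add: hproj_vert fstL[OF z] vproj_vert A0 linear_0[OF linear_hproj])
  obtain D where D: "((\<lambda>y. hproj N y (X y)) has_derivative D) (at z)" "\<forall>v. fst (D v) = fst (?B v)"
    using derivH[OF NC z smooth_deriv[OF X z]] by blast
  have fD: "frechet_derivative (\<lambda>y. hproj N y (X y)) (at z) = D"
    using frechet_derivative_at[OF D(1)] by simp
  have Lh: "J z (hproj N z q) = J z q" for q by (rule L_cong) simp
  have Lv: "J z (vproj N z q) = 0" for q using kerL[OF z] by simp
  have part2: "J z (dyn_nabla \<rho> N X z) = J z (?B (\<rho> z)) - J z (?A (hproj N z ?w))"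
    unfolding dyn_nabla_def lie_def fD
    using linear_add[OF linL[OF z]] linear_diff[OF linL[OF z]] Lh Lv L_cong[of "D (\<rho> z)" "?B (\<rho> z)"] D(2)
    by simp
  have a: "vproj N z (J z (?B (\<rho> z)) + Gfun J z (\<rho> z) ?w - ?A (J z ?w))
     = J z (?B (\<rho> z)) + Gfun J z (\<rho> z) ?w - ?A (J z ?w) + hproj N z ?w"
  proof -
    have "hproj N z (J z (?B (\<rho> z)) + Gfun J z (\<rho> z) ?w - ?A (J z ?w)) = hproj N z (- ?A (J z ?w))"
      by (rule hproj_cong) (simp add: fstL[OF z] fstG)
    also have "\<dots> = - hproj N z ?w"
      using linear_neg[OF linear_hproj] hproj_cong[of "?A (J z ?w)" ?w] R1 by metis
    finally show ?thesis by (simp add: vproj_def)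
  qed
  have b: "J z (?A (hproj N z ?w)) = J z (?A ?w) - vproj N z ?w"
  proof -
    have "hproj N z ?w = ?w - vproj N z ?w" by (simp add: vproj_def)
    then have "J z (?A (hproj N z ?w)) = J z (?A ?w) - J z (?A (vproj N z ?w))"
      using linear_diff[OF linA] linear_diff[OF linL[OF z]] by metis
    then show ?thesis using R2[of "vproj N z ?w"] by simp
  qed
  show ?thesis
    unfolding dyn_nabla_T_def part1 part2 a b Pfun_def by (simp add: algebra_simps)
qed


lemma P1: "fst (Pfun J \<rho> N z w) = 0"
  by (simp add: Pfun_def fstG R1 fstL[OF z])

lemma P2: "linear (Pfun J \<rho> N z)"
  unfolding Pfun_def
  by (intro linear_compose_add linear_compose_sub linG linear_hproj linear_vproj
      linear_compose[OF linL[OF z] linA, unfolded o_def]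
      linear_compose[OF linA linL[OF z], unfolded o_def])

lemma P3: "fst w = 0 \<Longrightarrow> Pfun J \<rho> N z w = 0"
proof -
  assume w: "fst w = 0"
  then have "J z w = 0" using kerL[OF z] by simp
  then show ?thesis using w by (simp add: Pfun_def Gvert linear_0[OF linA] R2 hproj_vert vproj_vert)
qed

lemma pair_expand: "((x::real^'n), (0::real^'n)) = (\<Sum>l\<in>UNIV. (x$l) *\<^sub>R (axis l 1, 0))"
  by (simp add: prod_eq_iff fst_sum snd_sum vec_expand[symmetric])

lemma P5: "Pfun J \<rho> N z w = (\<Sum>i\<in>UNIV. (fst w $ i) *\<^sub>R Pfun J \<rho> N z (axis i 1, 0))"
proof -
  have "w = (fst w, 0) + (0, snd w)" by simp
  then have "Pfun J \<rho> N z w = Pfun J \<rho> N z (fst w, 0) + Pfun J \<rho> N z (0, snd w)"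
    using linear_add[OF P2] by metis
  also have "\<dots> = Pfun J \<rho> N z (fst w, 0)" using P3[of "(0, snd w)"] by simp
  also have "\<dots> = (\<Sum>i\<in>UNIV. (fst w $ i) *\<^sub>R Pfun J \<rho> N z (axis i 1, 0))"
    by (subst pair_expand) (simp only: linear_sum[OF P2] linear_scale[OF P2])
  finally show ?thesis .
qed

lemma comp_deriv:
  assumes "(f has_derivative f') (at z)" "bounded_linear g"
  shows "frechet_derivative (\<lambda>y. g (f y)) (at z) v = g (f' v)"
proof -
  have "((\<lambda>y. g (f y)) has_derivative (\<lambda>v. g (f' v))) (at z)"
    using bounded_linear.has_derivative[OF assms(2) assms(1)] .
  then show ?thesis using frechet_derivative_at by metis
qed

lemma bl_snd_nth: "bounded_linear (\<lambda>q::'n cot. snd q $ j)"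
  by (rule bounded_linear_compose[OF bounded_linear_vec_nth bounded_linear_snd])
lemma bl_fst_nth: "bounded_linear (\<lambda>q::'n cot. fst q $ j)"
  by (rule bounded_linear_compose[OF bounded_linear_vec_nth bounded_linear_fst])

lemma Lq: "snd (J z q) $ j = (\<Sum>l\<in>UNIV. fst q $ l * tcoef J z l j)"
proof -
  have "J z q = J z (fst q, 0)" by (rule L_cong) simp
  also have "\<dots> = (\<Sum>l\<in>UNIV. (fst q $ l) *\<^sub>R J z (axis l 1, 0))"
    by (subst pair_expand) (simp only: linear_sum[OF linL[OF z]] linear_scale[OF linL[OF z]])
  finally show ?thesis by (simp add: snd_sum tcoef_def)
qed

lemma Lei: "J z (axis i 1, 0) = (\<Sum>k\<in>UNIV. tcoef J z i k *\<^sub>R (0, axis k 1))"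
proof -
  have "J z (axis i 1, 0) = (0, snd (J z (axis i 1, 0)))" using fstL[OF z] by (simp add: prod_eq_iff)
  also have "\<dots> = (\<Sum>k\<in>UNIV. tcoef J z i k *\<^sub>R (0, axis k 1))"
    by (subst vec_expand) (simp add: prod_eq_iff fst_sum snd_sum tcoef_def)
  finally show ?thesis .
qed

lemma hsum: "(\<Sum>l\<in>UNIV. axis i (1::real) $ l * f l) = f i"
  by (simp add: axis_def if_distrib[of "\<lambda>x. x * _"] cong: if_cong)

lemma hsum2: "(\<Sum>l\<in>UNIV. f l * axis i (1::real) $ l) = f i"
  by (simp add: axis_def if_distrib[of "\<lambda>x. _ * x"] cong: if_cong)

lemma P4: "snd (Pfun J \<rho> N z (axis i 1, 0)) $ j =
   frechet_derivative (\<lambda>y. tcoef J y i j) (at z) (\<rho> z)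
   - (\<Sum>k\<in>UNIV. tcoef J z i k * frechet_derivative (\<lambda>y. snd (\<rho> y) $ j) (at z) (0, axis k 1))
   + (\<Sum>k\<in>UNIV. tcoef J z k j * frechet_derivative (\<lambda>y. fst (\<rho> y) $ k) (at z) (axis i 1, 0))
   + 2 * N z i j"
proof -
  let ?A = "frechet_derivative \<rho> (at z)"
  have t: "frechet_derivative (\<lambda>y. tcoef J y i j) (at z) v = snd (Gfun J z v (axis i 1, 0)) $ j" for v
    unfolding tcoef_def by (rule comp_deriv[OF dJw bl_snd_nth])
  have c: "frechet_derivative (\<lambda>y. snd (\<rho> y) $ j) (at z) v = snd (?A v) $ j" for v j
    by (rule comp_deriv[OF dA bl_snd_nth])
  have d: "frechet_derivative (\<lambda>y. fst (\<rho> y) $ k) (at z) v = fst (?A v) $ k" for v k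
    by (rule comp_deriv[OF dA bl_fst_nth])
  have AL: "?A (J z (axis i 1, 0)) = (\<Sum>k\<in>UNIV. tcoef J z i k *\<^sub>R ?A (0, axis k 1))"
    unfolding Lei by (simp only: linear_sum[OF linA] linear_scale[OF linA])
  show ?thesis
    unfolding Pfun_def t c d
    by (simp add: AL Lq snd_sum hproj_def vproj_def hsum hsum2 mult.commute)
qed

end

theorem mainTheorem3:
  fixes W :: "('n::finite) cot set"
    and J :: "'n cot \<Rightarrow> 'n cot \<Rightarrow> 'n cot"
    and \<rho> :: "'n cot \<Rightarrow> 'n cot"
    and N :: "'n cot \<Rightarrow> 'n \<Rightarrow> 'n \<Rightarrow> real"
  assumes "open W"
    and "adapted_ats W J"
    and "J_regular W J \<rho>"
    and "nonlinear_connection W N"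
  shows "((\<forall>X. smooth_on W X \<longrightarrow> (\<forall>z\<in>W. dyn_nabla_T \<rho> N J X z = 0))
          \<longleftrightarrow> (\<forall>X. smooth_on W X \<longrightarrow>
                 (\<forall>z\<in>W. lie_deriv_T \<rho> J X z + hproj N z (X z) - vproj N z (X z) = 0)))
       \<and> ((\<forall>X. smooth_on W X \<longrightarrow>
                 (\<forall>z\<in>W. lie_deriv_T \<rho> J X z + hproj N z (X z) - vproj N z (X z) = 0))
          \<longleftrightarrow> (\<forall>z\<in>W. \<forall>i j. N z i j = 1/2 *
                 ((\<Sum>k\<in>UNIV. tcoef J z i k *
                      frechet_derivative (\<lambda>y. snd (\<rho> y) $ j) (at z) (0, axis k 1))
                  - (\<Sum>k\<in>UNIV. tcoef J z k j *
                      frechet_derivative (\<lambda>y. fst (\<rho> y) $ k) (at z) (axis i 1, 0))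
                  - frechet_derivative (\<lambda>y. tcoef J y i j) (at z) (\<rho> z))))"
proof -
  let ?P = "\<lambda>z w. Pfun J \<rho> N z w"
  let ?K = "\<lambda>z i j. frechet_derivative (\<lambda>y. tcoef J y i j) (at z) (\<rho> z)
   - (\<Sum>k\<in>UNIV. tcoef J z i k * frechet_derivative (\<lambda>y. snd (\<rho> y) $ j) (at z) (0, axis k 1))
   + (\<Sum>k\<in>UNIV. tcoef J z k j * frechet_derivative (\<lambda>y. fst (\<rho> y) $ k) (at z) (axis i 1, 0))
   + 2 * N z i j"
  have e1: "dyn_nabla_T \<rho> N J X z = ?P z (X z)" if "smooth_on W X" "z \<in> W" for X z
    using E1[OF assms(1-4) that(2) that(1)] .
  have e2: "lie_deriv_T \<rho> J X z + hproj N z (X z) - vproj N z (X z) = ?P z (X z)"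
    if "smooth_on W X" "z \<in> W" for X z
    using E2[OF assms(1-4) that(2) that(1)] .
  have p4: "snd (?P z (axis i 1, 0)) $ j = ?K z i j" if "z \<in> W" for z i j
    using P4[OF assms(1-4) that] .
  have eq3: "(\<forall>X. smooth_on W X \<longrightarrow> (\<forall>z\<in>W. ?P z (X z) = 0)) \<longleftrightarrow> (\<forall>z\<in>W. \<forall>i j. ?K z i j = 0)"
  proof
    assume H: "\<forall>X. smooth_on W X \<longrightarrow> (\<forall>z\<in>W. ?P z (X z) = 0)"
    show "\<forall>z\<in>W. \<forall>i j. ?K z i j = 0"
    proof (intro ballI allI)
      fix z i j assume z: "z \<in> W"
      have "?P z (axis i 1, 0) = 0" using H smooth_const[of W "(axis i 1, 0)"] z by blast
      then show "?K z i j = 0" using p4[OF z, of i j] by simp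
    qed
  next
    assume H: "\<forall>z\<in>W. \<forall>i j. ?K z i j = 0"
    show "\<forall>X. smooth_on W X \<longrightarrow> (\<forall>z\<in>W. ?P z (X z) = 0)"
    proof (intro allI impI ballI)
      fix X z assume z: "z \<in> W"
      have "?P z (axis i 1, 0) = 0" for i
        using P1[OF assms(1-4) z] p4[OF z, of i] H z by (simp add: prod_eq_iff vec_eq_iff)
      then show "?P z (X z) = 0" using P5[OF assms(1-4) z, of "X z"] by simp
    qed
  qed
  have eqK: "(\<forall>z\<in>W. \<forall>i j. ?K z i j = 0) \<longleftrightarrow> (\<forall>z\<in>W. \<forall>i j. N z i j = 1/2 *
                 ((\<Sum>k\<in>UNIV. tcoef J z i k *
                      frechet_derivative (\<lambda>y. snd (\<rho> y) $ j) (at z) (0, axis k 1))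
                  - (\<Sum>k\<in>UNIV. tcoef J z k j *
                      frechet_derivative (\<lambda>y. fst (\<rho> y) $ k) (at z) (axis i 1, 0))
                  - frechet_derivative (\<lambda>y. tcoef J y i j) (at z) (\<rho> z)))"
    by (auto simp: algebra_simps)
  show ?thesis
    using e1 e2 eq3 eqK by auto
qed

end
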